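(* Let $J:[0,\infty)\to\mathbb R$ be a concave, nondecreasing function with $J(0)=0$, and let $k:(0,\infty)\to(0,\infty)$ be nondecreasing and satisfy $k(Cz)\le C\,k(z)$ for all $C\ge1$ and $z>0$. If $z>0$ satisfies $z^2\le A^2+B^2J\bigl(k(z)\bigr)$ for some $A,B>0$, then $$J(z)\le K\,J(A)\Bigl[1+J\bigl(k(A)\bigr)\Bigl(\frac BA\Bigr)^2\Bigr],$$ where $K$ is a universal constant. *)

theory Defs
  imports "HOL-Analysis.Analysis"
begin

end

theory Submission
  imports Defs
begin

lemma conc_ratio:
  fixes J :: "real \<Rightarrow> real"
  assumes c: "concave_on {0..} J" and J0: "J 0 = 0" and a: "0 < a" and ab: "a \<le> b"
  shows "J b \<le> (b / a) * J a"
proof -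
  have b: "0 < b" using a ab by linarith
  have t: "0 \<le> a / b" "a / b \<le> 1" using a ab b by auto
  have "J ((1 - a/b) *\<^sub>R 0 + (a/b) *\<^sub>R b) \<ge> (1 - a/b) * J 0 + (a/b) * J b"
    by (rule concave_onD[OF c t]) (use b in auto)
  hence "J a \<ge> (a/b) * J b" using b J0 by simp
  hence "(b/a) * J a \<ge> (b/a) * ((a/b) * J b)" using a b by (intro mult_left_mono) auto
  thus ?thesis using a b by simp
qed

theorem lemma3p3:
  shows "\<exists>K::real. K > 0 \<and>
    (\<forall>(J::real \<Rightarrow> real) (k::real \<Rightarrow> real) (A::real) (B::real) (z::real).
       concave_on {0..} J \<and> mono_on {0..} J \<and> J 0 = 0 \<and>
       (\<forall>x>0. k x > 0) \<and> mono_on {0<..} k \<and>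
       (\<forall>C\<ge>1. \<forall>y>0. k (C * y) \<le> C * k y) \<and>
       A > 0 \<and> B > 0 \<and> z > 0 \<and>
       z\<^sup>2 \<le> A\<^sup>2 + B\<^sup>2 * J (k z)
       \<longrightarrow> J z \<le> K * J A * (1 + J (k A) * (B / A)\<^sup>2))"
proof (rule exI[of _ 2], intro conjI allI impI)
  fix J k :: "real \<Rightarrow> real" and A B z :: real
  assume H: "concave_on {0..} J \<and> mono_on {0..} J \<and> J 0 = 0 \<and>
       (\<forall>x>0. k x > 0) \<and> mono_on {0<..} k \<and>
       (\<forall>C\<ge>1. \<forall>y>0. k (C * y) \<le> C * k y) \<and>
       A > 0 \<and> B > 0 \<and> z > 0 \<and>
       z\<^sup>2 \<le> A\<^sup>2 + B\<^sup>2 * J (k z)"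
  then have c: "concave_on {0..} J" and m: "mono_on {0..} J" and J0: "J 0 = 0"
    and kp: "\<And>x. x > 0 \<Longrightarrow> k x > 0" and km: "mono_on {0<..} k"
    and kC: "\<And>C y. C \<ge> 1 \<Longrightarrow> y > 0 \<Longrightarrow> k (C * y) \<le> C * k y"
    and A: "A > 0" and B: "B > 0" and z: "z > 0" and ineq: "z\<^sup>2 \<le> A\<^sup>2 + B\<^sup>2 * J (k z)"
    by auto
  have Jnn: "\<And>x. x \<ge> 0 \<Longrightarrow> J x \<ge> 0" using m J0 by (metis atLeast_iff mono_onD order_refl)
  have JA: "J A \<ge> 0" using Jnn A by simp
  have kA: "k A > 0" using kp A by simp
  define q where "q = J (k A) * (B / A)\<^sup>2"
  have q: "q \<ge> 0" unfolding q_def using Jnn kA by simp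
  show "J z \<le> 2 * J A * (1 + J (k A) * (B / A)\<^sup>2)"
  proof (cases "z \<le> A")
    case True
    have "J z \<le> J A" using m True z A by (auto intro: mono_onD)
    also have "\<dots> \<le> 2 * J A * (1 + q)" using JA q by (simp add: mult_le_cancel_left1 algebra_simps)
    finally show ?thesis unfolding q_def .
  next
    case False
    define t where "t = z / A"
    have t1: "t > 1" using False A unfolding t_def by simp
    have zt: "z = t * A" using A unfolding t_def by simp
    have "k z \<le> t * k A" using kC[of t A] t1 A zt by simp
    hence "J (k z) \<le> J (t * k A)" using kp[OF z] kA t1 by (intro mono_onD[OF m]) auto
    also have "\<dots> \<le> t * J (k A)"
      using conc_ratio[OF c J0 kA, of "t * k A"] t1 kA by simp
    finally have Jkz: "J (k z) \<le> t * J (k A)" .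
    have "(t * A)\<^sup>2 \<le> A\<^sup>2 + B\<^sup>2 * (t * J (k A))"
      using ineq zt Jkz B by (smt (verit) mult_left_mono zero_le_power2)
    hence h: "A\<^sup>2 * t\<^sup>2 \<le> A\<^sup>2 * (1 + t * q)" unfolding q_def using A
      by (simp add: power_mult_distrib power_divide algebra_simps)
    have t2: "t\<^sup>2 \<le> 1 + t * q" using mult_left_le_imp_le[OF h] A by simp
    have "t\<^sup>2 < t + t * q" using t2 t1 by linarith
    hence "t * t < (1 + q) * t" by (simp add: power2_eq_square algebra_simps)
    hence "t < 1 + q" using t1 by (meson mult_right_less_imp_less less_le_not_le less_trans zero_less_one)
    have "J z \<le> t * J A" using conc_ratio[OF c J0 A, of z] False unfolding t_def by simp
    also have "\<dots> \<le> 2 * (1 + q) * J A" using \<open>t < 1 + q\<close> JA q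
      by (intro mult_right_mono) auto
    finally show ?thesis unfolding q_def by (simp add: algebra_simps)
  qed
qed (simp)

end
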